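(* Let $\Gamma\subset PSL(2,\mathbb{R})$ be a cocompact lattice with $S=\mathbb{D}/\Gamma$ a compact Riemann surface, and let $(M,\mathcal{F})$ be as described in the context. Then every continuous function $f:M\to\mathbb{C}$ which is holomorphic along each leaf is constant on each leaf (i.e. $(M,\mathcal{F})$ is holomorphically simple).
   Context: $PSL(2,\mathbb{R})\cong PSU(1,1)$ acts on $\mathbb{D}$ and on $S^1=\partial\mathbb{D}$ by Möbius maps. Identify $S^1\times(0,2\pi)$ with the space of arcs via $(\zeta,\theta)\mapsto\{\zeta e^{it\theta}:0\le t\le1\}$; $g\in PSL(2,\mathbb{R})$ acts by sending the arc $I$ to the arc $g(I)$, and this action extends continuously to $X_0=S^1\times[0,2\pi]$ by $g(\zeta,0)=(g(\zeta),0)$, $g(\zeta,2\pi)=(g(\zeta),2\pi)$. Let $X_1\cong S^2$ be obtained from $X_0$ by collapsing each of the circles $S^1\times\{0\}$ and $S^1\times\{2\pi\}$ to a point; the action descends to $X_1$. Let $M=(\mathbb{D}\times X_1)/\Gamma$, where $\gamma$ acts by $(z,x)\mapsto(\gamma^{-1}z,\gamma^{-1}x)$, foliated by the images of $\mathbb{D}\times\{x\}$, whose leaves are Riemann surfaces covering $S$. *)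

theory Defs
  imports "HOL-Complex_Analysis.Complex_Analysis"
begin

text \<open>Elements of PSU(1,1) = PSL(2,R), realised as Moebius automorphisms of the
  unit disc (they extend to the closed disc and to the boundary circle).\<close>
definition disc_aut :: "(complex \<Rightarrow> complex) \<Rightarrow> bool" where
  "disc_aut g \<longleftrightarrow> (\<exists>a \<alpha>. norm a < 1 \<and> g = (\<lambda>z. cis \<alpha> * (z - a) / (1 - cnj a * z)))"

text \<open>A cocompact lattice in PSL(2,R) acting freely on the disc, so that
  the quotient of the disc is a compact Riemann surface.  Group operations are
  compared on the closed disc, where the Moebius maps are defined.\<close>
definition surface_group :: "(complex \<Rightarrow> complex) set \<Rightarrow> bool" where
  "surface_group \<Gamma> \<longleftrightarrow>
     (\<forall>g\<in>\<Gamma>. disc_aut g) \<and>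
     (\<exists>e\<in>\<Gamma>. \<forall>z\<in>cball 0 1. e z = z) \<and>
     (\<forall>g\<in>\<Gamma>. \<forall>h\<in>\<Gamma>. \<exists>k\<in>\<Gamma>. \<forall>z\<in>cball 0 1. k z = g (h z)) \<and>
     (\<forall>g\<in>\<Gamma>. \<exists>h\<in>\<Gamma>. \<forall>z\<in>cball 0 1. h (g z) = z \<and> g (h z) = z) \<and>
     \<comment> \<open>discrete, i.e. properly discontinuous on the disc\<close>
     (\<forall>K. compact K \<and> K \<subseteq> ball 0 1 \<longrightarrow> finite {g\<in>\<Gamma>. g ` K \<inter> K \<noteq> {}}) \<and>
     \<comment> \<open>acts freely (torsion free), so the quotient is a Riemann surface\<close>
     (\<forall>g\<in>\<Gamma>. (\<exists>z\<in>ball 0 1. g z = z) \<longrightarrow> (\<forall>w\<in>cball 0 1. g w = w)) \<and>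
     \<comment> \<open>cocompact\<close>
     (\<exists>K. compact K \<and> K \<subseteq> ball 0 1 \<and> ball 0 1 = (\<Union>g\<in>\<Gamma>. g ` K))"

definition arc_of :: "complex \<Rightarrow> real \<Rightarrow> complex set" where
  "arc_of \<zeta> \<theta> = {\<zeta> * cis (t * \<theta>) | t. t \<in> {0..1}}"

definition X0 :: "(complex \<times> real) set" where
  "X0 = sphere 0 1 \<times> {0..2*pi}"

definition arc_act :: "(complex \<Rightarrow> complex) \<Rightarrow> complex \<times> real \<Rightarrow> complex \<times> real" where
  "arc_act g p = (if snd p = 0 \<or> snd p = 2*pi then (g (fst p), snd p)
     else (THE q. q \<in> sphere 0 1 \<times> {0<..<2*pi} \<and> arc_of (fst q) (snd q) = g ` arc_of (fst p) (snd p)))"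

end

theory Submission
  imports Defs
begin

definition tri :: "complex \<Rightarrow> complex \<Rightarrow> complex \<Rightarrow> real" where
  "tri z1 z2 z3 = Im ((z1 - z2) * (z2 - z3) * (z3 - z1) * cnj z1 * cnj z2 * cnj z3)"

lemma tri_cis: "tri 1 (cis s) (cis t) = 2 * (sin t - sin s + sin (s - t))"
proof -
  define A where "A = cis s"
  define B where "B = cis t"
  have A0: "A \<noteq> 0" "B \<noteq> 0" unfolding A_def B_def by auto
  have cA: "cnj A = inverse A" "cnj B = inverse B" unfolding A_def B_def by (simp_all add: cis_cnj cis_inverse)
  have e: "(1 - A) * (A - B) * (B - 1) * cnj 1 * cnj A * cnj B
     = - A + B - inverse B + inverse A + A / B - B / A"
    unfolding cA using A0 by (simp add: field_simps)
  have "inverse A = cis (-s)" "inverse B = cis (-t)" "A / B = cis (s - t)" "B / A = cis (t - s)"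
    unfolding A_def B_def by (simp_all add: cis_inverse cis_divide)
  then show ?thesis unfolding tri_def e[unfolded A_def B_def] by (simp add: sin_diff cis_divide cis_inverse)
qed

lemma trig_prod0: "sin (2*b) - sin (2*a) + sin (2*a - 2*b) = 4 * sin a * sin (a - b) * sin (b::real)"
proof -
  have "sin (2*a - 2*b) = sin (2*a) * cos (2*b) - cos (2*a) * sin (2*b)" by (rule sin_diff)
  then show ?thesis
    apply (simp add: sin_double cos_double sin_diff)
    apply (simp add: algebra_simps power2_eq_square)
    using sin_cos_squared_add[of a] sin_cos_squared_add[of b] by algebra
qed

lemma trig_prod: "sin t - sin s + sin (s - t) = 4 * sin (s/2) * sin ((s - t)/2) * sin (t/2::real)"
  using trig_prod0[of "t/2" "s/2"] by (simp add: diff_divide_distrib)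

lemma trig_sign:
  assumes "0 \<le> s" "s < 2*pi" "0 < t" "t < 2*pi"
  shows "sin t - sin s + sin (s - t) \<le> 0 \<longleftrightarrow> s \<le> t"
proof -
  have st: "sin (t/2) > 0" using assms by (intro sin_gt_zero) auto
  have ss: "sin (s/2) \<ge> 0" using assms by (intro sin_ge_zero) auto
  show ?thesis
  proof
    assume "s \<le> t"
    then have "sin ((t - s)/2) \<ge> 0" using assms by (intro sin_ge_zero) auto
    moreover have "sin ((s - t)/2) = - sin ((t - s)/2)"
      by (metis minus_diff_eq sin_minus divide_minus_left)
    ultimately have "sin ((s - t)/2) \<le> 0" by simp
    then have "sin (s/2) * sin ((s - t)/2) * sin (t/2) \<le> 0" using st ss
      by (simp add: mult_nonneg_nonpos mult_nonpos_nonneg)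
    then show "sin t - sin s + sin (s - t) \<le> 0" unfolding trig_prod by (simp add: mult_ac)
  next
    assume h: "sin t - sin s + sin (s - t) \<le> 0"
    show "s \<le> t"
    proof (rule ccontr)
      assume "\<not> s \<le> t"
      then have "sin ((s - t)/2) > 0" "sin (s/2) > 0" using assms
        by (auto intro!: sin_gt_zero)
      then have "sin (s/2) * sin ((s - t)/2) * sin (t/2) > 0" using st by simp
      then show False using h unfolding trig_prod by (simp add: mult_ac)
    qed
  qed
qed

lemma Arg2pi_cis: "0 \<le> s \<Longrightarrow> s < 2*pi \<Longrightarrow> Arg2pi (cis s) = s"
  by (rule Arg2pi_unique[of 1]) (auto simp: cis_conv_exp)

lemma cis_inj2pi: "0 \<le> s \<Longrightarrow> s < 2*pi \<Longrightarrow> 0 \<le> s' \<Longrightarrow> s' < 2*pi \<Longrightarrow> cis s = cis s' \<Longrightarrow> s = s'"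
  by (metis Arg2pi_cis)

lemma circle_param:
  assumes "norm z = 1" "norm \<zeta> = 1"
  shows "z = \<zeta> * cis (Arg2pi (z / \<zeta>))" "0 \<le> Arg2pi (z / \<zeta>)" "Arg2pi (z / \<zeta>) < 2*pi"
proof -
  have "norm (z / \<zeta>) = 1" using assms by (simp add: norm_divide)
  then have "cis (Arg2pi (z / \<zeta>)) = z / \<zeta>" by (metis complex_norm_eq_1_exp cis_conv_exp)
  then show "z = \<zeta> * cis (Arg2pi (z / \<zeta>))" using assms by auto
  show "0 \<le> Arg2pi (z / \<zeta>)" "Arg2pi (z / \<zeta>) < 2*pi" using Arg2pi by auto
qed

lemma mem_arc:
  assumes "norm \<zeta> = 1" "0 < \<theta>" "\<theta> < 2*pi" "0 \<le> s" "s < 2*pi"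
  shows "\<zeta> * cis s \<in> arc_of \<zeta> \<theta> \<longleftrightarrow> s \<le> \<theta>"
proof
  assume "\<zeta> * cis s \<in> arc_of \<zeta> \<theta>"
  then obtain t where t: "t \<in> {0..1}" "\<zeta> * cis s = \<zeta> * cis (t * \<theta>)" unfolding arc_of_def by auto
  have "cis s = cis (t * \<theta>)" using t assms by auto
  moreover have "t * \<theta> \<le> \<theta>" "0 \<le> t * \<theta>" using t assms by (auto simp: mult_le_cancel_right1)
  moreover have "t * \<theta> < 2*pi" using \<open>t * \<theta> \<le> \<theta>\<close> assms by linarith
  ultimately have "s = t * \<theta>" using assms by (intro cis_inj2pi) (auto simp del: cis.sel)
  then show "s \<le> \<theta>" using \<open>t * \<theta> \<le> \<theta>\<close> by simp
next
  assume "s \<le> \<theta>"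
  then have "s / \<theta> \<in> {0..1}" "\<zeta> * cis s = \<zeta> * cis (s / \<theta> * \<theta>)" using assms by auto
  then show "\<zeta> * cis s \<in> arc_of \<zeta> \<theta>" unfolding arc_of_def by blast
qed

lemma tri_rot:
  assumes "norm \<zeta> = 1"
  shows "tri (\<zeta> * u) (\<zeta> * v) (\<zeta> * w) = tri u v w"
proof -
  have z: "\<zeta> * cnj \<zeta> = 1" using assms by (simp add: complex_norm_square[symmetric])
  have "(\<zeta> * u - \<zeta> * v) * (\<zeta> * v - \<zeta> * w) * (\<zeta> * w - \<zeta> * u) * cnj (\<zeta> * u) * cnj (\<zeta> * v) * cnj (\<zeta> * w)
     = (\<zeta> * cnj \<zeta>)^3 * ((u - v) * (v - w) * (w - u) * cnj u * cnj v * cnj w)"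
    unfolding complex_cnj_mult power3_eq_cube by algebra
  then show ?thesis using z unfolding tri_def by (simp only: z power_one mult_1)
qed

lemma arc_of_norm: "norm \<zeta> = 1 \<Longrightarrow> z \<in> arc_of \<zeta> \<theta> \<Longrightarrow> norm z = 1"
  unfolding arc_of_def by (auto simp: norm_mult)

lemma arc_char:
  assumes "norm \<zeta> = 1" "0 < \<theta>" "\<theta> < 2*pi"
  shows "arc_of \<zeta> \<theta> = {z. norm z = 1 \<and> tri \<zeta> z (\<zeta> * cis \<theta>) \<le> 0}"
proof (intro set_eqI iffI)
  fix z assume z: "z \<in> arc_of \<zeta> \<theta>"
  have n: "norm z = 1" using arc_of_norm[OF assms(1) z] .
  define s where "s = Arg2pi (z / \<zeta>)"
  have zs: "z = \<zeta> * cis s" "0 \<le> s" "s < 2*pi" using circle_param[OF n assms(1)] s_def by auto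
  have "s \<le> \<theta>" using mem_arc[OF assms zs(2,3)] z zs(1) by simp
  then have "tri 1 (cis s) (cis \<theta>) \<le> 0" using trig_sign[OF zs(2,3) assms(2,3)] tri_cis by simp
  then have "tri \<zeta> z (\<zeta> * cis \<theta>) \<le> 0" using tri_rot[OF assms(1), of 1 "cis s" "cis \<theta>"] zs(1) by simp
  then show "z \<in> {z. norm z = 1 \<and> tri \<zeta> z (\<zeta> * cis \<theta>) \<le> 0}" using n by simp
next
  fix z assume "z \<in> {z. norm z = 1 \<and> tri \<zeta> z (\<zeta> * cis \<theta>) \<le> 0}"
  then have n: "norm z = 1" and tz: "tri \<zeta> z (\<zeta> * cis \<theta>) \<le> 0" by auto
  define s where "s = Arg2pi (z / \<zeta>)"
  have zs: "z = \<zeta> * cis s" "0 \<le> s" "s < 2*pi" using circle_param[OF n assms(1)] s_def by auto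
  have "tri 1 (cis s) (cis \<theta>) \<le> 0" using tri_rot[OF assms(1), of 1 "cis s" "cis \<theta>"] zs(1) tz by simp
  then have "s \<le> \<theta>" using trig_sign[OF zs(2,3) assms(2,3)] tri_cis by simp
  then show "z \<in> arc_of \<zeta> \<theta>" using mem_arc[OF assms zs(2,3)] zs(1) by simp
qed

definition mob :: "complex \<Rightarrow> real \<Rightarrow> complex \<Rightarrow> complex" where
  "mob a \<alpha> = (\<lambda>z. cis \<alpha> * (z - a) / (1 - cnj a * z))"

lemma disc_aut_mob: "disc_aut g \<longleftrightarrow> (\<exists>a \<alpha>. norm a < 1 \<and> g = mob a \<alpha>)"
  unfolding disc_aut_def mob_def by simp

lemma den_nz: "norm a < 1 \<Longrightarrow> norm z \<le> 1 \<Longrightarrow> 1 - cnj a * z \<noteq> 0"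
proof
  assume "norm a < 1" "norm z \<le> 1" "1 - cnj a * z = 0"
  then have "norm (cnj a * z) = 1" by (metis eq_iff_diff_eq_0 norm_one)
  moreover have "norm (cnj a * z) < 1" using \<open>norm a < 1\<close> \<open>norm z \<le> 1\<close>
    by (simp add: norm_mult) (meson le_less_trans mult_left_le norm_ge_zero)
  ultimately show False by simp
qed

lemma norm_id: "(norm (1 - cnj a * z))^2 - (norm (z - a))^2 = (1 - (norm a)^2) * (1 - (norm z)^2)"
  unfolding cmod_power2 by (simp add: power2_eq_square algebra_simps)

lemma den_circle: "norm z = 1 \<Longrightarrow> norm (1 - cnj a * z) = norm (z - a)"
  using norm_id[of a z] by (simp add: power2_eq_iff_nonneg)

lemma mob_disc: assumes "norm a < 1" "norm z < 1" shows "norm (mob a \<alpha> z) < 1"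
proof -
  have d: "1 - cnj a * z \<noteq> 0" using den_nz assms by simp
  have "(1 - (norm a)^2) * (1 - (norm z)^2) > 0" using assms
    by (intro mult_pos_pos) (simp_all add: power_less_one_iff abs_square_less_1)
  then have "(norm (z - a))^2 < (norm (1 - cnj a * z))^2" using norm_id[of a z] by linarith
  then have "norm (z - a) < norm (1 - cnj a * z)" by (simp add: power_less_imp_less_base)
  then show ?thesis using d unfolding mob_def by (simp add: norm_mult norm_divide divide_less_eq)
qed

lemma mob_circle: assumes "norm a < 1" "norm z = 1" shows "norm (mob a \<alpha> z) = 1"
proof -
  have d: "1 - cnj a * z \<noteq> 0" using den_nz assms by simp
  moreover have "z \<noteq> a" using assms by auto
  ultimately show ?thesis using den_circle[OF assms(2), of a] unfolding mob_def by (simp add: norm_mult norm_divide)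
qed

lemma tri_mob:
  assumes a: "norm a < 1" and z: "norm z1 = 1" "norm z2 = 1" "norm z3 = 1"
  shows "\<exists>c>0. tri (mob a \<alpha> z1) (mob a \<alpha> z2) (mob a \<alpha> z3) = c * tri z1 z2 z3"
proof -
  define d1 where "d1 = 1 - cnj a * z1"
  define d2 where "d2 = 1 - cnj a * z2"
  define d3 where "d3 = 1 - cnj a * z3"
  have nz: "d1 \<noteq> 0" "d2 \<noteq> 0" "d3 \<noteq> 0" unfolding d1_def d2_def d3_def using den_nz a z by auto
  have cc: "cis \<alpha> * cnj (cis \<alpha>) = 1" by (simp add: cis_cnj cis_mult)
  have zc: "z1 * cnj z1 = 1" "z2 * cnj z2 = 1" "z3 * cnj z3 = 1" using z by (simp_all add: complex_norm_square[symmetric])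
  have cm: "cnj (mob a \<alpha> zi) = cnj (cis \<alpha>) * cnj zi * di / cnj di"
    if "zi * cnj zi = 1" "di = 1 - cnj a * zi" for zi di
  proof -
    have "cnj zi * (1 - cnj a * zi) = cnj zi - cnj a * (zi * cnj zi)" by (simp add: algebra_simps)
    then have "cnj (zi - a) = cnj zi * di" using that by simp
    then show ?thesis unfolding mob_def using that by (simp add: complex_cnj_divide)
  qed
  have df: "mob a \<alpha> zi - mob a \<alpha> zj = cis \<alpha> * (1 - a * cnj a) * (zi - zj) / (di * dj)"
    if "di = 1 - cnj a * zi" "dj = 1 - cnj a * zj" "di \<noteq> 0" "dj \<noteq> 0" for zi zj di dj
  proof -
    have "1 - cnj a * zi \<noteq> 0" "1 - cnj a * zj \<noteq> 0" using that by auto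
    then show ?thesis unfolding mob_def that(1,2) by (simp add: field_simps)
  qed
  define k where "k = (1 - (norm a)^2)^3 / ((norm d1)^2 * (norm d2)^2 * (norm d3)^2)"
  have kpos: "k > 0" unfolding k_def using a nz by (simp add: abs_square_less_1 power_less_one_iff)
  have ka: "1 - a * cnj a = of_real (1 - (norm a)^2)" by (simp only: of_real_diff of_real_1 complex_norm_square)
  have kd: "di * cnj di = of_real ((norm di)^2)" for di by (rule complex_norm_square[symmetric])
  have E: "(mob a \<alpha> z1 - mob a \<alpha> z2) * (mob a \<alpha> z2 - mob a \<alpha> z3) * (mob a \<alpha> z3 - mob a \<alpha> z1)
       * cnj (mob a \<alpha> z1) * cnj (mob a \<alpha> z2) * cnj (mob a \<alpha> z3)
     = (cis \<alpha> * cnj (cis \<alpha>))^3 * (1 - a * cnj a)^3 / ((d1 * cnj d1) * (d2 * cnj d2) * (d3 * cnj d3))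
       * ((z1 - z2) * (z2 - z3) * (z3 - z1) * cnj z1 * cnj z2 * cnj z3)"
    unfolding df[OF d1_def d2_def nz(1,2)] df[OF d2_def d3_def nz(2,3)] df[OF d3_def d1_def nz(3,1)]
      cm[OF zc(1) d1_def] cm[OF zc(2) d2_def] cm[OF zc(3) d3_def]
    using nz by (simp add: field_simps power3_eq_cube)
  also have "\<dots> = of_real k * ((z1 - z2) * (z2 - z3) * (z3 - z1) * cnj z1 * cnj z2 * cnj z3)"
    unfolding cc ka kd k_def by simp
  finally show ?thesis unfolding tri_def using kpos by (intro exI[of _ k]) simp
qed

lemma disc_aut_circle: "disc_aut h \<Longrightarrow> norm z = 1 \<Longrightarrow> norm (h z) = 1"
  unfolding disc_aut_mob using mob_circle by blast

lemma disc_aut_disc: "disc_aut h \<Longrightarrow> norm z < 1 \<Longrightarrow> norm (h z) < 1"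
  unfolding disc_aut_mob using mob_disc by blast

lemma cis_ne_1: "0 < \<theta> \<Longrightarrow> \<theta> < 2*pi \<Longrightarrow> cis \<theta> \<noteq> 1"
  using cis_inj2pi[of \<theta> 0] by auto

lemma arc_image:
  assumes a: "norm a < 1" and h: "disc_aut h"
    and inv: "\<forall>z\<in>cball 0 1. h (mob a \<alpha> z) = z \<and> mob a \<alpha> (h z) = z"
    and \<zeta>: "norm \<zeta> = 1" and th: "0 < \<theta>" "\<theta> < 2*pi"
  shows "\<exists>\<theta>'. 0 < \<theta>' \<and> \<theta>' < 2*pi \<and> mob a \<alpha> ` arc_of \<zeta> \<theta> = arc_of (mob a \<alpha> \<zeta>) \<theta>'"
proof -
  let ?g = "mob a \<alpha>"
  define \<eta> where "\<eta> = \<zeta> * cis \<theta>"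
  have \<eta>: "norm \<eta> = 1" unfolding \<eta>_def using \<zeta> by (simp add: norm_mult)
  have ne: "\<eta> \<noteq> \<zeta>" unfolding \<eta>_def using \<zeta> cis_ne_1[OF th] by auto
  have g\<zeta>: "norm (?g \<zeta>) = 1" and g\<eta>: "norm (?g \<eta>) = 1" using mob_circle a \<zeta> \<eta> by auto
  have gne: "?g \<eta> \<noteq> ?g \<zeta>" using inv ne \<zeta> \<eta> by (metis mem_cball_0 order_refl)
  define \<theta>' where "\<theta>' = Arg2pi (?g \<eta> / ?g \<zeta>)"
  have p: "?g \<eta> = ?g \<zeta> * cis \<theta>'" "0 \<le> \<theta>'" "\<theta>' < 2*pi"
    using circle_param[OF g\<eta> g\<zeta>] \<theta>'_def by auto
  have "\<theta>' \<noteq> 0" using p(1) gne by auto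
  with p have th': "0 < \<theta>'" "\<theta>' < 2*pi" by auto
  have "?g ` arc_of \<zeta> \<theta> = arc_of (?g \<zeta>) \<theta>'"
  proof (intro set_eqI iffI)
    fix w assume "w \<in> ?g ` arc_of \<zeta> \<theta>"
    then obtain z where z: "z \<in> arc_of \<zeta> \<theta>" "w = ?g z" by auto
    have zn: "norm z = 1" and tz: "tri \<zeta> z \<eta> \<le> 0" using z(1) arc_char[OF \<zeta> th] \<eta>_def by auto
    obtain c where c: "c > 0" "tri (?g \<zeta>) (?g z) (?g \<eta>) = c * tri \<zeta> z \<eta>"
      using tri_mob[OF a \<zeta> zn \<eta>] by blast
    have "tri (?g \<zeta>) w (?g \<zeta> * cis \<theta>') \<le> 0" using c tz z(2) p(1)
      by (simp add: mult_nonneg_nonpos)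
    moreover have "norm w = 1" using mob_circle[OF a zn] z(2) by simp
    ultimately show "w \<in> arc_of (?g \<zeta>) \<theta>'" using arc_char[OF g\<zeta> th'] by simp
  next
    fix w assume "w \<in> arc_of (?g \<zeta>) \<theta>'"
    then have wn: "norm w = 1" and tw: "tri (?g \<zeta>) w (?g \<eta>) \<le> 0" using arc_char[OF g\<zeta> th'] p(1) by auto
    define z where "z = h w"
    have zn: "norm z = 1" unfolding z_def using disc_aut_circle[OF h wn] .
    have gz: "?g z = w" unfolding z_def using inv wn by auto
    obtain c where c: "c > 0" "tri (?g \<zeta>) (?g z) (?g \<eta>) = c * tri \<zeta> z \<eta>"
      using tri_mob[OF a \<zeta> zn \<eta>] by blast
    have "c * tri \<zeta> z \<eta> \<le> 0" using c tw gz by simp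
    then have "tri \<zeta> z \<eta> \<le> 0" using c(1) by (simp add: mult_le_0_iff)
    then have "z \<in> arc_of \<zeta> \<theta>" using arc_char[OF \<zeta> th] zn \<eta>_def by simp
    then show "w \<in> ?g ` arc_of \<zeta> \<theta>" using gz by force
  qed
  then show ?thesis using th' by blast
qed

lemma arc_start: "\<zeta> \<in> arc_of \<zeta> \<theta>"
  unfolding arc_of_def by (rule CollectI, rule exI[of _ 0]) auto

lemma arc_unique_aux:
  assumes z1: "norm \<zeta>1 = 1" and z2: "norm \<zeta>2 = 1"
    and t1: "0 < \<theta>1" "\<theta>1 < 2*pi" and t2: "0 < \<theta>2" "\<theta>2 < 2*pi"
    and eq: "arc_of \<zeta>1 \<theta>1 = arc_of \<zeta>2 \<theta>2"
  shows "\<zeta>1 = \<zeta>2"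
proof -
  define s0 where "s0 = Arg2pi (\<zeta>2 / \<zeta>1)"
  have p: "\<zeta>2 = \<zeta>1 * cis s0" "0 \<le> s0" "s0 < 2*pi" using circle_param[OF z2 z1] s0_def by auto
  have "\<zeta>2 \<in> arc_of \<zeta>1 \<theta>1" using eq arc_start by simp
  then have s0le: "s0 \<le> \<theta>1" using mem_arc[OF z1 t1 p(2,3)] p(1) by simp
  have "s0 = 0"
  proof (rule ccontr)
    assume "s0 \<noteq> 0"
    then have s0p: "0 < s0" using p by simp
    have "cis s0 * cis (2*pi - s0) = 1" by (simp add: cis_mult)
    then have c1: "\<zeta>1 = \<zeta>2 * cis (2*pi - s0)" using p(1) by (simp add: mult.assoc)
    have "\<zeta>1 \<in> arc_of \<zeta>2 \<theta>2" using eq arc_start by blast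
    then have "\<zeta>2 * cis (2*pi - s0) \<in> arc_of \<zeta>2 \<theta>2" using c1 by simp
    then have le2: "2*pi - s0 \<le> \<theta>2" using mem_arc[OF z2 t2, of "2*pi - s0"] s0p p(2,3) by simp
    define e where "e = (2*pi - \<theta>1) / 2"
    have e: "0 < e" "e < 2*pi - s0" using t1 s0le unfolding e_def by auto
    have "cis s0 * cis (2*pi - s0 - e) = cis (2*pi - e)" by (simp add: cis_mult)
    then have P1: "\<zeta>1 * cis (2*pi - e) = \<zeta>2 * cis (2*pi - s0 - e)"
      using p(1) by (simp add: mult.assoc)
    have "\<zeta>2 * cis (2*pi - s0 - e) \<in> arc_of \<zeta>2 \<theta>2"
      using mem_arc[OF z2 t2, of "2*pi - s0 - e"] e le2 s0p by simp
    then have "\<zeta>1 * cis (2*pi - e) \<in> arc_of \<zeta>1 \<theta>1" using eq P1 by simp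
    then have "2*pi - e \<le> \<theta>1" using mem_arc[OF z1 t1, of "2*pi - e"] e t1 by (simp add: e_def)
    then show False using t1 unfolding e_def by (simp add: field_simps)
  qed
  then show ?thesis using p by simp
qed

lemma arc_unique:
  assumes z1: "norm \<zeta>1 = 1" and z2: "norm \<zeta>2 = 1"
    and t1: "0 < \<theta>1" "\<theta>1 < 2*pi" and t2: "0 < \<theta>2" "\<theta>2 < 2*pi"
    and eq: "arc_of \<zeta>1 \<theta>1 = arc_of \<zeta>2 \<theta>2"
  shows "\<zeta>1 = \<zeta>2 \<and> \<theta>1 = \<theta>2"
proof -
  have z: "\<zeta>1 = \<zeta>2" by (rule arc_unique_aux[OF assms])
  have "\<theta>1 \<le> \<theta>2" if "norm \<zeta> = 1" "0 < \<theta>1" "\<theta>1 < 2*pi" "0 < \<theta>2" "\<theta>2 < 2*pi"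
     "arc_of \<zeta> \<theta>1 = arc_of \<zeta> \<theta>2" for \<zeta> \<theta>1 \<theta>2
  proof -
    have "\<zeta> * cis \<theta>1 \<in> arc_of \<zeta> \<theta>1" using mem_arc[of \<zeta> \<theta>1 \<theta>1] that by simp
    then show ?thesis using mem_arc[of \<zeta> \<theta>2 \<theta>1] that by simp
  qed
  note L = this
  have "\<theta>1 \<le> \<theta>2" by (rule L[OF z2 t1 t2 eq[unfolded z]])
  moreover have "\<theta>2 \<le> \<theta>1" by (rule L[OF z2 t2 t1 eq[unfolded z, symmetric]])
  ultimately show ?thesis using z by simp
qed


lemma arc_act_generic:
  assumes g: "disc_aut g" and h: "disc_aut h"
    and inv: "\<forall>z\<in>cball 0 1. h (g z) = z \<and> g (h z) = z"
    and \<zeta>: "norm \<zeta> = 1" and th: "0 < \<theta>" "\<theta> < 2*pi"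
  shows "arc_act g (\<zeta>, \<theta>) \<in> sphere 0 1 \<times> {0<..<2*pi}
     \<and> arc_of (fst (arc_act g (\<zeta>, \<theta>))) (snd (arc_act g (\<zeta>, \<theta>))) = g ` arc_of \<zeta> \<theta>"
proof -
  obtain a \<alpha> where a: "norm a < 1" and gd: "g = mob a \<alpha>" using g unfolding disc_aut_mob by blast
  obtain \<theta>' where th': "0 < \<theta>'" "\<theta>' < 2*pi" and im: "g ` arc_of \<zeta> \<theta> = arc_of (g \<zeta>) \<theta>'"
    using arc_image[OF a h inv[unfolded gd] \<zeta> th] gd by blast
  let ?P = "\<lambda>q. q \<in> sphere 0 1 \<times> {0<..<2*pi} \<and> arc_of (fst q) (snd q) = g ` arc_of \<zeta> \<theta>"
  have ex: "?P (g \<zeta>, \<theta>')" using th' im disc_aut_circle[OF g \<zeta>] by simp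
  have un: "q = (g \<zeta>, \<theta>')" if "?P q" for q
  proof -
    have "fst q = g \<zeta> \<and> snd q = \<theta>'"
      using that ex by (intro arc_unique) auto
    then show ?thesis by (cases q) auto
  qed
  have "arc_act g (\<zeta>, \<theta>) = (THE q. ?P q)" unfolding arc_act_def using th by auto
  moreover have "?P (THE q. ?P q)" by (rule theI[of ?P, OF ex un])
  ultimately show ?thesis by simp
qed

lemma mob_diff:
  assumes "norm a < 1" "norm z \<le> 1" "norm w \<le> 1"
  shows "mob a \<alpha> z - mob a \<alpha> w = cis \<alpha> * (1 - a * cnj a) * (z - w) / ((1 - cnj a * z) * (1 - cnj a * w))"
proof -
  have "1 - cnj a * z \<noteq> 0" "1 - cnj a * w \<noteq> 0" using den_nz assms by auto
  then show ?thesis unfolding mob_def by (simp add: field_simps)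
qed

lemma cis_minus_1: "norm (cis x - 1) \<le> \<bar>x\<bar>"
proof -
  have "(norm (cis x - 1))^2 = (cos x - 1)^2 + (sin x)^2"
    by (simp add: cmod_power2)
  also have "\<dots> = 2 - 2 * cos x" using sin_cos_squared_add[of x] by (simp add: power2_eq_square algebra_simps)
  also have "\<dots> = 4 * (sin (x/2))^2" using cos_double_sin[of "x/2"] by simp
  also have "\<dots> \<le> 4 * (x/2)^2"
  proof -
    have "(sin (x/2))^2 \<le> (x/2)^2" using abs_sin_x_le_abs_x[of "x/2"] abs_le_square_iff by blast
    then show ?thesis by simp
  qed
  also have "\<dots> = x^2" by (simp add: power2_eq_square)
  finally have "(norm (cis x - 1))^2 \<le> \<bar>x\<bar>^2" by simp
  then show ?thesis using power2_le_imp_le abs_ge_zero by blast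
qed

lemma circle_cover:
  fixes N :: nat
  assumes m: "norm m = 1" and p: "norm p = 1" and N: "N > 0"
  shows "\<exists>j<N. norm (cis (- 2*pi / N) ^ j * p - m) \<le> 2*pi / N"
proof -
  define \<sigma> where "\<sigma> = Arg2pi (p / m)"
  have ps: "p = m * cis \<sigma>" "0 \<le> \<sigma>" "\<sigma> < 2*pi" using circle_param[OF p m] \<sigma>_def by auto
  define j where "j = nat (floor (\<sigma> * N / (2*pi)))"
  have fl0: "0 \<le> floor (\<sigma> * N / (2*pi))" using ps N by simp
  have jr: "real j = floor (\<sigma> * N / (2*pi))" unfolding j_def using fl0 by simp
  have lo: "real j \<le> \<sigma> * N / (2*pi)" and hi: "\<sigma> * N / (2*pi) < real j + 1"
    unfolding jr by linarith+
  have "\<sigma> * N / (2*pi) < N" using ps N by (simp add: divide_less_eq)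
  then have jN: "j < N" using lo by linarith
  define y where "y = \<sigma> - 2*pi*j/N"
  have Np: "real N > 0" using N by simp
  have "real j * (2*pi) \<le> \<sigma> * N" using lo by (simp add: le_divide_eq)
  then have y0: "0 \<le> y" unfolding y_def using Np by (simp add: field_simps)
  have "\<sigma> * N < (real j + 1) * (2*pi)" using hi by (simp add: divide_less_eq)
  moreover have "y * N = \<sigma> * N - 2*pi*j" unfolding y_def using Np by (simp add: field_simps)
  ultimately have "y * N \<le> 2*pi" by (simp add: algebra_simps)
  then have "y \<le> 2*pi/N" using Np by (simp add: le_divide_eq)
  note y = y0 this
  have e1: "cis (- 2*pi / N) ^ j = cis (real j * (- 2*pi / N))" by (rule Complex.DeMoivre)
  have e2: "\<sigma> + real j * (- 2*pi / N) = y" unfolding y_def by (simp add: field_simps)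
  have "cis (- 2*pi / N) ^ j * p = m * (cis \<sigma> * cis (real j * (- 2*pi / N)))"
    unfolding e1 ps(1) by (simp add: ac_simps)
  also have "\<dots> = m * cis y" unfolding cis_mult e2 ..
  finally have "cis (- 2*pi / N) ^ j * p = m * cis y" .
  moreover have "m * cis y - m = m * (cis y - 1)" by (simp add: algebra_simps)
  ultimately have "norm (cis (- 2*pi / N) ^ j * p - m) = norm (cis y - 1)"
    using m by (simp add: norm_mult)
  also have "\<dots> \<le> 2*pi/N" using cis_minus_1[of y] y by simp
  finally show ?thesis using jN by blast
qed

lemma prod_zero2:
  assumes f: "f holomorphic_on S" and g: "g holomorphic_on S" and S: "open S" "connected S"
    and z: "\<And>z. z \<in> S \<Longrightarrow> f z * g z = 0"
  shows "(\<forall>z\<in>S. f z = 0) \<or> (\<forall>z\<in>S. g z = 0)"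
proof (cases "\<forall>z\<in>S. f z = 0")
  case False
  then obtain w where w: "w \<in> S" "f w \<noteq> 0" by auto
  have "continuous_on S f" using f holomorphic_on_imp_continuous_on by blast
  then have "isCont f w" using S w continuous_on_eq_continuous_at by blast
  then obtain e where e: "e > 0" "\<forall>y. dist w y < e \<longrightarrow> f y \<noteq> 0"
    using continuous_at_avoid[of w f 0] w(2) by blast
  define U where "U = ball w e"
  have U: "open U" "w \<in> U" "\<forall>y\<in>U. f y \<noteq> 0" unfolding U_def using e by auto
  have "\<forall>y\<in>S. g y = 0"
  proof
    fix y assume y: "y \<in> S"
    show "g y = 0"
    proof (rule analytic_continuation_open[of "U \<inter> S" S g "\<lambda>_. 0"])
      show "open (U \<inter> S)" using U S by auto
      show "U \<inter> S \<noteq> {}" using U w by auto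
      show "\<And>z. z \<in> U \<inter> S \<Longrightarrow> g z = 0" using z U by (metis IntD1 IntD2 mult_eq_0_iff)
    qed (use S g y in auto)
  qed
  then show ?thesis by blast
qed simp

lemma prod_zero:
  fixes N :: nat
  assumes "\<And>j. j < N \<Longrightarrow> f j holomorphic_on S" and S: "open S" "connected S" and ne: "S \<noteq> {}"
    and z: "\<And>z. z \<in> S \<Longrightarrow> (\<Prod>j<N. f j z) = 0"
  shows "\<exists>j<N. \<forall>z\<in>S. f j z = 0"
  using assms
proof (induction N)
  case 0
  then show ?case using ne by auto
next
  case (Suc N)
  have h1: "(\<lambda>z. \<Prod>j<N. f j z) holomorphic_on S" using Suc.prems(1) by (intro holomorphic_on_prod) auto
  have h2: "f N holomorphic_on S" using Suc.prems(1) by auto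
  have "(\<forall>z\<in>S. (\<Prod>j<N. f j z) = 0) \<or> (\<forall>z\<in>S. f N z = 0)"
    using prod_zero2[OF h1 h2 S] Suc.prems(5) by simp
  then show ?case
  proof
    assume "\<forall>z\<in>S. (\<Prod>j<N. f j z) = 0"
    then obtain j where "j < N" "\<forall>z\<in>S. f j z = 0" using Suc.IH Suc.prems by auto
    then show ?case by (intro exI[of _ j]) auto
  qed auto
qed


lemma mob_contract:
  assumes a: "norm a < 1" and r0: "0 \<le> r0" "r0 < 1" and hz: "norm (mob a \<alpha> z) \<le> r0"
    and z: "norm z < 1" and p: "norm p = 1" and c: "c > 0"
    and w1: "norm w1 = 1" "norm (w1 - p) \<ge> c" and w2: "norm w2 = 1" "norm (w2 - p) \<ge> c"
    and zp: "norm (z - p) < \<eta>" and e1: "\<eta> \<le> c/4" and e2: "r0 * (2*\<eta>) / (1 - r0) \<le> c/4"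
  shows "norm (mob a \<alpha> w1 - mob a \<alpha> w2) \<le> 16 * \<eta> / ((1 - r0)^2 * c^2)"
proof -
  have dz: "1 - cnj a * z \<noteq> 0" using den_nz a z by simp
  have eta0: "\<eta> > 0" using zp norm_ge_zero[of "z - p"] by linarith
  have "norm (mob a \<alpha> z) = norm (z - a) / norm (1 - cnj a * z)"
    unfolding mob_def by (simp add: norm_mult norm_divide)
  then have za: "norm (z - a) \<le> r0 * norm (1 - cnj a * z)" using hz dz by (simp add: divide_le_eq)
  define \<delta> where "\<delta> = 1 - (norm z)^2"
  have \<delta>pos: "\<delta> > 0" unfolding \<delta>_def using z by (simp add: power_less_one_iff abs_square_less_1)
  have "norm z \<ge> 1 - norm (z - p)" using p norm_triangle_ineq2[of p z] by (simp add: norm_minus_commute)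
  moreover have "1 - (norm z)^2 = (1 - norm z) * (1 + norm z)" by (simp add: power2_eq_square algebra_simps)
  moreover have "(1 - norm z) * (1 + norm z) \<le> (1 - norm z) * 2"
    using z by (intro mult_left_mono) auto
  moreover have "(1 - norm z) * 2 = 2 - 2 * norm z" by simp
  ultimately have "\<delta> \<le> 2 * norm (z - p)" unfolding \<delta>_def by linarith
  then have \<delta>le: "\<delta> \<le> 2 * \<eta>" using zp by simp
  have "1 - a * cnj z = (1 - z * cnj z) + cnj z * (z - a)" by (simp add: algebra_simps)
  moreover have "z * cnj z = of_real ((norm z)^2)" by (rule complex_norm_square[symmetric])
  ultimately have "1 - a * cnj z = of_real \<delta> + cnj z * (z - a)" unfolding \<delta>_def by simp
  then have "norm (1 - a * cnj z) \<le> \<delta> + norm z * norm (z - a)"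
    using norm_triangle_ineq[of "of_real \<delta>" "cnj z * (z - a)"] \<delta>pos by (simp add: norm_mult)
  moreover have "norm (1 - a * cnj z) = norm (1 - cnj a * z)"
    by (metis complex_cnj_cnj complex_cnj_diff complex_cnj_mult complex_cnj_one complex_mod_cnj)
  moreover have "norm z * norm (z - a) \<le> norm (z - a)" using z by (simp add: mult_left_le_one_le)
  ultimately have "norm (1 - cnj a * z) \<le> \<delta> + r0 * norm (1 - cnj a * z)" using za by linarith
  then have d1: "norm (1 - cnj a * z) \<le> \<delta> / (1 - r0)" using r0 by (simp add: field_simps)
  have za2: "norm (z - a) \<le> c/4"
  proof -
    have "norm (z - a) \<le> r0 * (\<delta> / (1 - r0))" using za d1 r0 by (meson mult_left_mono order_trans)
    also have "\<dots> \<le> r0 * (2*\<eta>) / (1 - r0)" using \<delta>le r0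
      by (simp add: divide_right_mono mult_left_mono)
    finally show ?thesis using e2 by simp
  qed
  have aa: "1 - (norm a)^2 \<le> 2 * \<eta> / (1 - r0)^2"
  proof -
    have "(1 - (norm a)^2) * \<delta> \<le> (norm (1 - cnj a * z))^2"
      using norm_id[of a z] zero_le_power2[of "norm (z - a)"] unfolding \<delta>_def by linarith
    also have "\<dots> \<le> (\<delta> / (1 - r0))^2" using d1 by (simp add: power_mono)
    also have "\<dots> = (\<delta> / (1 - r0)^2) * \<delta>" by (simp add: power2_eq_square)
    finally have "1 - (norm a)^2 \<le> \<delta> / (1 - r0)^2" using \<delta>pos mult_right_le_imp_le by blast
    also have "\<dots> \<le> 2 * \<eta> / (1 - r0)^2" using \<delta>le by (simp add: divide_right_mono)
    finally show ?thesis .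
  qed
  have wa: "norm (1 - cnj a * w) \<ge> c/2" if "norm w = 1" "norm (w - p) \<ge> c" for w
  proof -
    have "norm (w - p) \<le> norm ((w - a) + (a - z)) + norm (z - p)"
      using norm_triangle_ineq[of "(w-a)+(a-z)" "z-p"] by simp
    moreover have "norm ((w - a) + (a - z)) \<le> norm (w - a) + norm (a - z)" by (rule norm_triangle_ineq)
    moreover have "norm (a - z) = norm (z - a)" by (rule norm_minus_commute)
    ultimately have "norm (w - p) \<le> norm (w - a) + norm (z - p) + norm (z - a)" by linarith
    then have "norm (w - a) \<ge> c/2" using that zp e1 za2 by linarith
    then show ?thesis using den_circle[OF that(1), of a] by simp
  qed
  have n1: "norm (1 - cnj a * w1) \<ge> c/2" and n2: "norm (1 - cnj a * w2) \<ge> c/2" using wa w1 w2 by auto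
  have w12: "norm (w1 - w2) \<le> 2" using w1 w2 norm_triangle_ineq4[of w1 w2] by simp
  have "norm (mob a \<alpha> w1 - mob a \<alpha> w2)
      = (1 - (norm a)^2) * norm (w1 - w2) / (norm (1 - cnj a * w1) * norm (1 - cnj a * w2))"
  proof -
    have "norm (1 - a * cnj a) = 1 - (norm a)^2"
    proof -
      have "1 - a * cnj a = of_real (1 - (norm a)^2)" by (simp only: of_real_diff of_real_1 complex_norm_square)
      moreover have "1 - (norm a)^2 \<ge> 0" using a by (simp add: abs_square_le_1 less_imp_le)
      ultimately show ?thesis by (metis norm_of_real abs_of_nonneg)
    qed
    then show ?thesis unfolding mob_diff[OF a, of w1 w2, simplified w1 w2, simplified] by (simp add: norm_mult norm_divide)
  qed
  also have "\<dots> \<le> (2 * \<eta> / (1 - r0)^2) * 2 / ((c/2) * (c/2))"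
  proof (rule frac_le)
    show "0 \<le> (2 * \<eta> / (1 - r0)^2) * 2" using zp by (simp add: order_trans[OF norm_ge_zero less_imp_le])
    show "(1 - (norm a)^2) * norm (w1 - w2) \<le> (2 * \<eta> / (1 - r0)^2) * 2"
      using aa w12 a eta0 by (intro mult_mono) (auto simp: abs_square_le_1 less_imp_le)
    show "0 < (c/2) * (c/2)" using c by simp
    show "(c/2) * (c/2) \<le> norm (1 - cnj a * w1) * norm (1 - cnj a * w2)"
      using n1 n2 c by (intro mult_mono) auto
  qed
  also have "\<dots> = 16 * \<eta> / ((1 - r0)^2 * c^2)" by (simp add: field_simps power2_eq_square)
  finally show ?thesis .
qed


lemma prod_bound:
  fixes f :: "nat \<Rightarrow> complex"
  assumes B: "\<And>i. i < N \<Longrightarrow> norm (f i) \<le> B" and j: "j < N" and e: "norm (f j) \<le> \<epsilon>"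
  shows "norm (\<Prod>i<N. f i) \<le> \<epsilon> * B ^ (N - 1)"
proof -
  have B0: "0 \<le> B" using B[OF j] norm_ge_zero order_trans by blast
  have "(\<Prod>i<N. f i) = f j * (\<Prod>i\<in>{..<N} - {j}. f i)" using j by (simp add: prod.remove)
  then have "norm (\<Prod>i<N. f i) = norm (f j) * (\<Prod>i\<in>{..<N} - {j}. norm (f i))"
    by (simp add: norm_mult prod_norm)
  also have "\<dots> \<le> \<epsilon> * (\<Prod>i\<in>{..<N} - {j}. B)"
    using e B order_trans[OF norm_ge_zero e] by (intro mult_mono prod_mono) (auto simp: prod_nonneg)
  also have "(\<Prod>i\<in>{..<N} - {j}. B) = B ^ (N - 1)" using j by simp
  finally show ?thesis .
qed

lemma product_trick:
  fixes \<phi> :: "complex \<Rightarrow> complex"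
  assumes hol: "\<phi> holomorphic_on ball 0 1"
   and B: "\<And>z. z \<in> ball 0 1 \<Longrightarrow> norm (\<phi> z) \<le> B" and Bpos: "B > 0"
   and m: "norm m = 1" and cc: "cc > 0"
   and BL: "\<And>\<epsilon>. \<epsilon> > 0 \<Longrightarrow> \<exists>\<eta>>0. \<forall>z\<in>ball 0 1. \<forall>p. norm p = 1 \<longrightarrow> norm (p - m) \<le> cc
              \<longrightarrow> norm (z - p) < \<eta> \<longrightarrow> norm (\<phi> z) < \<epsilon>"
  shows "\<forall>z\<in>ball 0 1. \<phi> z = 0"
proof -
  define N where "N = nat (ceiling (2*pi / cc)) + 1"
  have N0: "N > 0" unfolding N_def by simp
  have "2*pi / cc \<le> real N" unfolding N_def by linarith
  then have Ncc: "2*pi / N \<le> cc" using cc N0 by (simp add: field_simps)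
  define \<omega> where "\<omega> = cis (- 2*pi / N)"
  have \<omega>n: "norm (\<omega> ^ j) = 1" for j unfolding \<omega>_def by (simp add: norm_power)
  have inball: "\<omega> ^ j * z \<in> ball 0 1" if "z \<in> ball 0 1" for j z
    using that \<omega>n[of j] by (simp add: norm_mult)
  have holj: "(\<lambda>z. \<phi> (\<omega> ^ j * z)) holomorphic_on ball 0 1" for j
  proof -
    have "(\<phi> \<circ> (\<lambda>z. \<omega> ^ j * z)) holomorphic_on ball 0 1"
      by (rule holomorphic_on_compose_gen[OF _ hol]) (auto intro!: holomorphic_intros inball)
    then show ?thesis by (simp add: o_def)
  qed
  define P where "P z = (\<Prod>j<N. \<phi> (\<omega> ^ j * z))" for z
  have holP: "P holomorphic_on ball 0 1" unfolding P_def by (intro holomorphic_on_prod holj)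
  have Pbd: "norm (P z0) \<le> \<epsilon> * B ^ (N - 1)" if z0: "z0 \<in> ball 0 1" and eps: "\<epsilon> > 0" for z0 \<epsilon>
  proof -
    obtain \<eta> where \<eta>: "\<eta> > 0" and \<eta>B: "\<forall>z\<in>ball 0 1. \<forall>p. norm p = 1 \<longrightarrow> norm (p - m) \<le> cc
              \<longrightarrow> norm (z - p) < \<eta> \<longrightarrow> norm (\<phi> z) < \<epsilon>" using BL[OF eps] by blast
    have z0n: "norm z0 < 1" using z0 by simp
    define M where "M = max (norm z0) (1 - \<eta>)"
    have mx: "M < 1" "norm z0 \<le> M" "1 - \<eta> \<le> M" unfolding M_def using z0n \<eta> by auto
    have n0: "0 \<le> M" using mx(2) norm_ge_zero[of z0] by linarith
    define r where "r = (M + 1) / 2"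
    have r: "norm z0 < r" "1 - \<eta> < r" "r < 1" "0 < r" unfolding r_def using mx n0 by auto
    have sub: "cball 0 r \<subseteq> ball 0 1" using r by auto
    have fr: "norm (P z) \<le> \<epsilon> * B ^ (N - 1)" if z: "z \<in> sphere 0 r" for z
    proof -
      have zn: "norm z = r" using z by simp
      define p where "p = z / of_real r"
      have pn: "norm p = 1" unfolding p_def using zn r by (simp add: norm_divide)
      have zp: "z - p = of_real (r - 1) * p" unfolding p_def using r by (simp add: field_simps)
      have zpn: "norm (z - p) = 1 - r" unfolding zp norm_mult norm_of_real using pn r by simp
      obtain j where j: "j < N" and jm: "norm (cis (- 2*pi / N) ^ j * p - m) \<le> 2*pi / N"
        using circle_cover[OF m pn N0] by blast
      have jm': "norm (\<omega> ^ j * p - m) \<le> cc" using jm Ncc unfolding \<omega>_def by linarith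
      have "norm (\<omega> ^ j * p) = 1" using \<omega>n pn by (simp add: norm_mult)
      moreover have "\<omega> ^ j * z \<in> ball 0 1" using inball[of z j] zn r by simp
      moreover have "norm (\<omega> ^ j * z - \<omega> ^ j * p) < \<eta>"
        using \<omega>n[of j] zpn r by (simp add: norm_mult flip: right_diff_distrib)
      ultimately have small: "norm (\<phi> (\<omega> ^ j * z)) \<le> \<epsilon>" using \<eta>B jm' by fastforce
      have "z \<in> ball 0 1" using zn r by simp
      then have "\<And>i. i < N \<Longrightarrow> norm (\<phi> (\<omega> ^ i * z)) \<le> B" using B inball by blast
      then show ?thesis unfolding P_def using prod_bound[of N "\<lambda>i. \<phi> (\<omega> ^ i * z)" B j \<epsilon>] j small by blast
    qed
    show ?thesis
    proof (rule maximum_modulus_frontier[of P "ball 0 r"])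
      have "ball 0 r \<subseteq> ball 0 1" using r by auto
      then show "P holomorphic_on interior (ball 0 r)"
        using holomorphic_on_subset[OF holP] by simp
      show "continuous_on (closure (ball 0 r)) P"
        using holomorphic_on_imp_continuous_on[OF holP] continuous_on_subset sub r by auto
      show "bounded (ball 0 r)" by simp
      show "\<And>z. z \<in> frontier (ball 0 r) \<Longrightarrow> norm (P z) \<le> \<epsilon> * B ^ (N - 1)" using fr r by auto
      show "z0 \<in> ball 0 r" using r by simp
    qed
  qed
  have P0: "P z = 0" if z: "z \<in> ball 0 1" for z
  proof (rule ccontr)
    assume "P z \<noteq> 0"
    then have pos: "norm (P z) > 0" by simp
    have BN: "B ^ (N - 1) > 0" using Bpos by simp
    define \<epsilon> where "\<epsilon> = norm (P z) / (2 * B ^ (N - 1))"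
    have "\<epsilon> > 0" unfolding \<epsilon>_def using pos BN by (intro divide_pos_pos mult_pos_pos) auto
    then have "norm (P z) \<le> \<epsilon> * B ^ (N - 1)" using Pbd z by blast
    also have "\<dots> = norm (P z) / 2"
    proof -
      have gen: "\<And>x c::real. c \<noteq> 0 \<Longrightarrow> x / (2*c) * c = x/2" by (simp add: field_simps)
      have "B ^ (N - 1) \<noteq> 0" using BN by linarith
      then show ?thesis unfolding \<epsilon>_def by (rule gen)
    qed
    finally show False using pos by simp
  qed
  obtain j where j: "j < N" and jz: "\<forall>z\<in>ball 0 1. \<phi> (\<omega> ^ j * z) = 0"
    using prod_zero[of N "\<lambda>j z. \<phi> (\<omega> ^ j * z)" "ball 0 1"] holj P0 unfolding P_def by auto
  show ?thesis
  proof
    fix z :: complex assume z: "z \<in> ball 0 1"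
    have c: "\<omega> * cnj \<omega> = 1" unfolding \<omega>_def by (simp add: cis_cnj cis_mult)
    have "\<omega> ^ j * (cnj \<omega> ^ j * z) = (\<omega> * cnj \<omega>) ^ j * z" by (simp add: power_mult_distrib)
    then have e: "\<omega> ^ j * (cnj \<omega> ^ j * z) = z" using c by simp
    have "cnj \<omega> ^ j * z \<in> ball 0 1" using z \<omega>n[of j] by (simp add: norm_mult norm_power)
    then show "\<phi> z = 0" using jz e by metis
  qed
qed


lemma arc_far:
  assumes \<zeta>: "norm \<zeta> = 1" and th: "0 < \<theta>" "\<theta> < 2*pi" and w: "w \<in> arc_of \<zeta> \<theta>"
  shows "norm (w - (- \<zeta> * cis (\<theta>/2))) \<ge> 1 + cos (\<theta>/2)"
proof -
  obtain t where t: "t \<in> {0..1}" "w = \<zeta> * cis (t * \<theta>)" using w unfolding arc_of_def by auto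
  define s where "s = t * \<theta>"
  have s: "0 \<le> s" "s \<le> \<theta>" unfolding s_def using t th by (auto simp: mult_le_cancel_right1)
  have "w - (- \<zeta> * cis (\<theta>/2)) = \<zeta> * cis (\<theta>/2) * (cis (s - \<theta>/2) + 1)"
    unfolding t s_def[symmetric] by (simp add: algebra_simps cis_mult)
  then have "norm (w - (- \<zeta> * cis (\<theta>/2))) = norm (cis (s - \<theta>/2) + 1)" using \<zeta> by (simp add: norm_mult)
  also have "\<dots> \<ge> Re (cis (s - \<theta>/2) + 1)" by (rule complex_Re_le_cmod)
  finally have 1: "norm (w - (- \<zeta> * cis (\<theta>/2))) \<ge> cos (s - \<theta>/2) + 1" by simp
  have "\<bar>s - \<theta>/2\<bar> \<le> \<theta>/2" using s by (auto simp: abs_if)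
  then have "cos (\<theta>/2) \<le> cos \<bar>s - \<theta>/2\<bar>" using s th by (intro cos_monotone_0_pi_le) auto
  then have "cos (\<theta>/2) \<le> cos (s - \<theta>/2)" by simp
  then show ?thesis using 1 by simp
qed

lemma X0_iff: "(\<zeta>, t) \<in> X0 \<longleftrightarrow> norm \<zeta> = 1 \<and> 0 \<le> t \<and> t \<le> 2*pi"
  by (simp add: X0_def)

lemma generic_leaf:
  fixes \<Gamma> :: "(complex \<Rightarrow> complex) set"
    and F :: "complex \<times> (complex \<times> real) \<Rightarrow> complex"
  assumes K: "compact K" "K \<subseteq> ball 0 1" "K \<noteq> {}"
   and rep: "\<And>z. z \<in> ball 0 1 \<Longrightarrow> \<exists>k\<in>K. \<exists>h\<in>\<Gamma>. h z = k \<and> disc_aut h \<and>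
              (\<exists>g. disc_aut g \<and> (\<forall>u\<in>cball 0 1. g (h u) = u \<and> h (g u) = u))"
   and cont: "continuous_on (ball 0 1 \<times> X0) F"
   and inv: "\<And>g z x. g \<in> \<Gamma> \<Longrightarrow> z \<in> ball 0 1 \<Longrightarrow> x \<in> X0 \<Longrightarrow> F (g z, arc_act g x) = F (z, x)"
   and hol: "\<And>x. x \<in> X0 \<Longrightarrow> (\<lambda>z. F (z, x)) holomorphic_on ball 0 1"
   and F0: "\<And>z \<zeta>. z \<in> ball 0 1 \<Longrightarrow> norm \<zeta> = 1 \<Longrightarrow> F (z, (\<zeta>, 0)) = c0"
   and \<zeta>: "norm \<zeta> = 1" and th: "0 < \<theta>" "\<theta> < 2*pi"
  shows "\<forall>z\<in>ball 0 1. F (z, (\<zeta>, \<theta>)) = c0"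
proof -
  define x where "x = (\<zeta>, \<theta>)"
  have xX: "x \<in> X0" unfolding x_def X0_iff using \<zeta> th by simp
  obtain k0 where k0: "k0 \<in> K" "\<And>k. k \<in> K \<Longrightarrow> norm k \<le> norm k0"
    using continuous_attains_sup[OF K(1) K(3), of norm] continuous_on_norm_id by blast
  define r0 where "r0 = norm k0"
  have r0: "0 \<le> r0" "r0 < 1" unfolding r0_def using k0 K(2) by auto
  have Kr0: "\<And>k. k \<in> K \<Longrightarrow> norm k \<le> r0" using k0 r0_def by auto
  have cX0: "compact X0" unfolding X0_def by (intro compact_Times) auto
  have cKX: "compact (K \<times> X0)" using K(1) cX0 by (rule compact_Times)
  have KXsub: "K \<times> X0 \<subseteq> ball 0 1 \<times> X0" using K(2) by auto
  have contK: "continuous_on (K \<times> X0) F" using continuous_on_subset[OF cont KXsub] .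
  obtain M where M: "\<And>y. y \<in> K \<times> X0 \<Longrightarrow> norm (F y) \<le> M"
    using compact_imp_bounded[OF compact_continuous_image[OF contK cKX]] unfolding bounded_iff by auto
  have uc: "uniformly_continuous_on (K \<times> X0) F" using compact_uniformly_continuous[OF contK cKX] .
  have rep2: "\<exists>k\<in>K. \<exists>a \<alpha>. norm a < 1 \<and> mob a \<alpha> z = k \<and>
      F (z, x) = F (k, arc_act (mob a \<alpha>) x) \<and> arc_act (mob a \<alpha>) x \<in> sphere 0 1 \<times> {0<..<2*pi} \<and>
      arc_of (fst (arc_act (mob a \<alpha>) x)) (snd (arc_act (mob a \<alpha>) x)) = mob a \<alpha> ` arc_of \<zeta> \<theta>"
    if z: "z \<in> ball 0 1" for z
  proof -
    obtain k h g where k: "k \<in> K" and h: "h \<in> \<Gamma>" "h z = k" "disc_aut h" and g: "disc_aut g"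
      and hg: "\<forall>u\<in>cball 0 1. g (h u) = u \<and> h (g u) = u"
      using rep[OF z] by blast
    obtain a \<alpha> where a: "norm a < 1" "h = mob a \<alpha>" using h(3) unfolding disc_aut_mob by blast
    have aa: "arc_act h x \<in> sphere 0 1 \<times> {0<..<2*pi} \<and>
        arc_of (fst (arc_act h x)) (snd (arc_act h x)) = h ` arc_of \<zeta> \<theta>"
      unfolding x_def using arc_act_generic[OF h(3) g hg \<zeta> th] .
    have "F (z, x) = F (k, arc_act h x)" using inv[OF h(1) z xX] h(2) by simp
    then have e: "F (z, x) = F (k, arc_act (mob a \<alpha>) x)" using a(2) by simp
    note aa' = aa[unfolded a(2)]
    have hk: "mob a \<alpha> z = k" using h(2) a(2) by simp
    show ?thesis
      apply (rule bexI[OF _ k])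
      apply (rule exI[of _ a], rule exI[of _ \<alpha>])
      using a(1) hk e aa' by simp
  qed
  define B where "B = M + norm c0 + 1"
  have Bb: "norm (F (z, x) - c0) \<le> B" if z: "z \<in> ball 0 1" for z
  proof -
    obtain k a \<alpha> where k: "k \<in> K" and "norm a < 1" "mob a \<alpha> z = k" and e: "F (z, x) = F (k, arc_act (mob a \<alpha>) x)"
      and q: "arc_act (mob a \<alpha>) x \<in> sphere 0 1 \<times> {0<..<2*pi}"
      and "arc_of (fst (arc_act (mob a \<alpha>) x)) (snd (arc_act (mob a \<alpha>) x)) = mob a \<alpha> ` arc_of \<zeta> \<theta>"
      using rep2[OF z] apply (elim bexE exE conjE) apply assumption done
    have "arc_act (mob a \<alpha>) x \<in> X0" using q unfolding X0_def by auto
    then have "norm (F (z, x)) \<le> M" using M k e by auto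
    then show ?thesis unfolding B_def using norm_triangle_ineq4[of "F (z, x)" c0] by linarith
  qed
  have Bpos: "B > 0"
  proof -
    have "norm (F (k0, x)) \<le> M" using M k0(1) xX by auto
    then show ?thesis unfolding B_def using norm_ge_zero[of "F (k0, x)"] norm_ge_zero[of c0] by linarith
  qed
  define m where "m = - \<zeta> * cis (\<theta>/2)"
  have mn: "norm m = 1" unfolding m_def using \<zeta> by (simp add: norm_mult)
  define cc where "cc = (1 + cos (\<theta>/2)) / 2"
  have ccpos: "cc > 0"
  proof -
    have "cos (\<theta>/2) > -1"
      using cos_monotone_0_pi[of "\<theta>/2" pi] th by simp
    then show ?thesis unfolding cc_def by simp
  qed
  have far: "norm (w - p) \<ge> cc" if w: "w \<in> arc_of \<zeta> \<theta>" and p: "norm (p - m) \<le> cc" for w p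
  proof -
    have "norm (w - m) \<ge> 2 * cc" using arc_far[OF \<zeta> th w] unfolding m_def cc_def by simp
    moreover have "norm (w - m) \<le> norm (w - p) + norm (p - m)"
      using norm_triangle_ineq[of "w - p" "p - m"] by simp
    ultimately show ?thesis using p by linarith
  qed
  have BL: "\<exists>\<eta>>0. \<forall>z\<in>ball 0 1. \<forall>p. norm p = 1 \<longrightarrow> norm (p - m) \<le> cc \<longrightarrow> norm (z - p) < \<eta>
              \<longrightarrow> norm (F (z, x) - c0) < \<epsilon>" if eps: "\<epsilon> > 0" for \<epsilon>
  proof -
    obtain \<tau> where \<tau>: "\<tau> > 0" and \<tau>F: "\<And>y y'. y \<in> K \<times> X0 \<Longrightarrow> y' \<in> K \<times> X0 \<Longrightarrow> dist y' y < \<tau> \<Longrightarrow> dist (F y') (F y) < \<epsilon>"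
      using uc eps unfolding uniformly_continuous_on_def by metis
    define s0 where "s0 = min (\<tau>/2) (pi/2)"
    have s0: "0 < s0" "s0 \<le> \<tau>/2" "s0 \<le> pi/2" unfolding s0_def using \<tau> by auto
    define d1 where "d1 = sin s0"
    have d1: "d1 > 0" unfolding d1_def using s0 by (intro sin_gt_zero) auto
    define \<eta> where "\<eta> = min (cc/4) (min (cc * (1 - r0) / (8 * (r0 + 1))) (d1 * (1 - r0)^2 * cc^2 / 32))"
    have \<eta>pos: "\<eta> > 0" unfolding \<eta>_def using ccpos r0 d1 by auto
    have e1: "\<eta> \<le> cc/4" unfolding \<eta>_def by (rule min.cobounded1)
    have e2: "r0 * (2*\<eta>) / (1 - r0) \<le> cc/4"
    proof -
      have "\<eta> \<le> cc * (1 - r0) / (8 * (r0 + 1))" unfolding \<eta>_def by (simp only: min_le_iff_disj order_refl simp_thms)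
      then have "\<eta> * (8 * (r0 + 1)) \<le> cc * (1 - r0)" using r0 by (simp add: le_divide_eq)
      moreover have "r0 * (2*\<eta>) * 4 \<le> \<eta> * (8 * (r0 + 1))" using \<eta>pos r0 by (simp add: algebra_simps)
      ultimately have "r0 * (2*\<eta>) * 4 \<le> cc * (1 - r0)" by linarith
      then show ?thesis using r0 by (simp add: divide_le_eq field_simps)
    qed
    have e3: "16 * \<eta> / ((1 - r0)^2 * cc^2) < d1"
    proof -
      have "\<eta> \<le> d1 * (1 - r0)^2 * cc^2 / 32" unfolding \<eta>_def by (simp only: min_le_iff_disj order_refl simp_thms)
      moreover have "(1 - r0)^2 * cc^2 > 0" using r0 ccpos by simp
      ultimately have "16 * \<eta> / ((1 - r0)^2 * cc^2) \<le> d1 / 2"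
        by (simp add: divide_le_eq field_simps)
      then show ?thesis using d1 by linarith
    qed
    show ?thesis
    proof (intro exI[of _ \<eta>] conjI \<eta>pos ballI allI impI)
      fix z p assume z: "z \<in> ball 0 1" and p: "norm p = 1" and pm: "norm (p - m) \<le> cc" and zp: "norm (z - p) < \<eta>"
      obtain k a \<alpha> where k: "k \<in> K" and a: "norm a < 1" and hz: "mob a \<alpha> z = k"
        and e: "F (z, x) = F (k, arc_act (mob a \<alpha>) x)"
        and q: "arc_act (mob a \<alpha>) x \<in> sphere 0 1 \<times> {0<..<2*pi}"
        and qa: "arc_of (fst (arc_act (mob a \<alpha>) x)) (snd (arc_act (mob a \<alpha>) x)) = mob a \<alpha> ` arc_of \<zeta> \<theta>"
        using rep2[OF z] apply (elim bexE exE conjE) apply assumption done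
      define \<zeta>' where "\<zeta>' = fst (arc_act (mob a \<alpha>) x)"
      define \<theta>' where "\<theta>' = snd (arc_act (mob a \<alpha>) x)"
      have qe: "arc_act (mob a \<alpha>) x = (\<zeta>', \<theta>')" unfolding \<zeta>'_def \<theta>'_def by simp
      have q': "norm \<zeta>' = 1" "0 < \<theta>'" "\<theta>' < 2*pi" using q unfolding qe by auto
      have qa': "arc_of \<zeta>' \<theta>' = mob a \<alpha> ` arc_of \<zeta> \<theta>" using qa unfolding \<zeta>'_def \<theta>'_def .
      have hzn: "norm (mob a \<alpha> z) \<le> r0" using hz Kr0 k by simp
      have zn: "norm z < 1" using z by simp
      have diam: "norm (mob a \<alpha> w1 - mob a \<alpha> w2) < d1"
        if w1: "w1 \<in> arc_of \<zeta> \<theta>" and w2: "w2 \<in> arc_of \<zeta> \<theta>" for w1 w2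
      proof -
        have "norm (mob a \<alpha> w1 - mob a \<alpha> w2) \<le> 16 * \<eta> / ((1 - r0)^2 * cc^2)"
          by (rule mob_contract[OF a r0 hzn zn p ccpos arc_of_norm[OF \<zeta> w1] far[OF w1 pm]
                arc_of_norm[OF \<zeta> w2] far[OF w2 pm] zp e1 e2])
        then show ?thesis using e3 by linarith
      qed
      have th's: "\<theta>' < s0"
      proof (rule ccontr)
        assume "\<not> \<theta>' < s0"
        then have le: "s0 \<le> \<theta>'" by simp
        have "\<zeta>' \<in> arc_of \<zeta>' \<theta>'" by (rule arc_start)
        moreover have "\<zeta>' * cis s0 \<in> arc_of \<zeta>' \<theta>'"
          using mem_arc[OF q' , of s0] le s0 by simp
        ultimately obtain w1 w2 where w: "w1 \<in> arc_of \<zeta> \<theta>" "w2 \<in> arc_of \<zeta> \<theta>"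
          "\<zeta>' = mob a \<alpha> w1" "\<zeta>' * cis s0 = mob a \<alpha> w2" unfolding qa' by blast
        have "mob a \<alpha> w1 - mob a \<alpha> w2 = \<zeta>' * (1 - cis s0)"
          unfolding w(3,4)[symmetric] by (simp add: algebra_simps)
        then have "norm (mob a \<alpha> w1 - mob a \<alpha> w2) = norm (1 - cis s0)"
          using q'(1) by (simp add: norm_mult)
        moreover have "\<bar>Im (1 - cis s0)\<bar> \<le> norm (1 - cis s0)" by (rule abs_Im_le_cmod)
        moreover have "\<bar>Im (1 - cis s0)\<bar> = d1" unfolding d1_def using s0 sin_ge_zero[of s0] by simp
        ultimately have "norm (mob a \<alpha> w1 - mob a \<alpha> w2) \<ge> d1" by linarith
        then show False using diam[OF w(1,2)] by simp
      qed
      have y1: "(k, (\<zeta>', \<theta>')) \<in> K \<times> X0" and y2: "(k, (\<zeta>', 0)) \<in> K \<times> X0"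
        using k q' by (auto simp: X0_iff)
      have "dist (k, (\<zeta>', \<theta>')) (k, (\<zeta>', 0)) = \<theta>'"
        using q' by (simp add: dist_Pair_Pair dist_real_def)
      then have "dist (k, (\<zeta>', \<theta>')) (k, (\<zeta>', 0)) < \<tau>" using th's s0 by simp
      then have "dist (F (k, (\<zeta>', \<theta>'))) (F (k, (\<zeta>', 0))) < \<epsilon>" using \<tau>F[OF y2 y1] by simp
      moreover have "F (k, (\<zeta>', 0)) = c0" using F0[OF _ q'(1)] k K(2) by auto
      ultimately show "norm (F (z, x) - c0) < \<epsilon>" using e qe by (simp add: dist_norm)
    qed
  qed
  have "(\<lambda>z. F (z, x) - c0) holomorphic_on ball 0 1"
    using hol[OF xX] by (intro holomorphic_intros)
  then have "\<forall>z\<in>ball 0 1. F (z, x) - c0 = 0"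
    by (rule product_trick[OF _ Bb Bpos mn ccpos BL])
  then show ?thesis unfolding x_def by simp
qed

theorem mainTheorem8:
  fixes \<Gamma> :: "(complex \<Rightarrow> complex) set"
    and F :: "complex \<times> (complex \<times> real) \<Rightarrow> complex"
  assumes "surface_group \<Gamma>"
    and "continuous_on (ball 0 1 \<times> X0) F"
    and "\<And>z \<zeta> \<zeta>'. z \<in> ball 0 1 \<Longrightarrow> \<zeta> \<in> sphere 0 1 \<Longrightarrow> \<zeta>' \<in> sphere 0 1 \<Longrightarrow>
           F (z, (\<zeta>, 0)) = F (z, (\<zeta>', 0))"
    and "\<And>z \<zeta> \<zeta>'. z \<in> ball 0 1 \<Longrightarrow> \<zeta> \<in> sphere 0 1 \<Longrightarrow> \<zeta>' \<in> sphere 0 1 \<Longrightarrow>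
           F (z, (\<zeta>, 2*pi)) = F (z, (\<zeta>', 2*pi))"
    and "\<And>g z x. g \<in> \<Gamma> \<Longrightarrow> z \<in> ball 0 1 \<Longrightarrow> x \<in> X0 \<Longrightarrow> F (g z, arc_act g x) = F (z, x)"
    and "\<And>x. x \<in> X0 \<Longrightarrow> (\<lambda>z. F (z, x)) holomorphic_on ball 0 1"
  shows "\<forall>x\<in>X0. \<forall>z\<in>ball 0 1. \<forall>w\<in>ball 0 1. F (z, x) = F (w, x)"
proof -
  note SG = assms(1)[unfolded surface_group_def]
  have S1: "\<forall>g\<in>\<Gamma>. disc_aut g" using SG by (elim conjE) assumption
  have S4: "\<forall>g\<in>\<Gamma>. \<exists>h\<in>\<Gamma>. \<forall>z\<in>cball 0 1. h (g z) = z \<and> g (h z) = z"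
    using SG by (elim conjE) assumption
  have S7: "\<exists>K. compact K \<and> K \<subseteq> ball 0 1 \<and> ball 0 1 = (\<Union>g\<in>\<Gamma>. g ` K)"
    using SG by (elim conjE) assumption
  have G1: "\<And>g. g \<in> \<Gamma> \<Longrightarrow> disc_aut g" using S1 by blast
  have Ginv: "\<And>g. g \<in> \<Gamma> \<Longrightarrow> \<exists>h\<in>\<Gamma>. \<forall>z\<in>cball 0 1. h (g z) = z \<and> g (h z) = z"
    using S4 by blast
  obtain K where K: "compact K" "K \<subseteq> ball 0 1" "ball 0 1 = (\<Union>g\<in>\<Gamma>. g ` K)"
    using S7 by blast
  have Kne: "K \<noteq> {}"
  proof
    assume "K = {}"
    then have "ball (0::complex) 1 = {}" using K(3) by simp
    then show False by simp
  qed
  have rep: "\<exists>k\<in>K. \<exists>h\<in>\<Gamma>. h z = k \<and> disc_aut h \<and>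
              (\<exists>g. disc_aut g \<and> (\<forall>u\<in>cball 0 1. g (h u) = u \<and> h (g u) = u))"
    if z: "z \<in> ball 0 1" for z
  proof -
    obtain \<gamma> k where \<gamma>: "\<gamma> \<in> \<Gamma>" and k: "k \<in> K" and zk: "z = \<gamma> k" using z K(3) by auto
    obtain h where h: "h \<in> \<Gamma>" and hg: "\<forall>u\<in>cball 0 1. h (\<gamma> u) = u \<and> \<gamma> (h u) = u"
      using Ginv[OF \<gamma>] by blast
    have "k \<in> cball 0 1" using k K(2) by auto
    then have hz: "h z = k" using hg zk by auto
    have gg: "disc_aut \<gamma> \<and> (\<forall>u\<in>cball 0 1. \<gamma> (h u) = u \<and> h (\<gamma> u) = u)" using G1[OF \<gamma>] hg by blast
    show ?thesis
      apply (rule bexI[OF _ k])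
      apply (rule bexI[OF _ h])
      apply (rule conjI[OF hz])
      apply (rule conjI[OF G1[OF h]])
      apply (rule exI[of _ \<gamma>])
      by (rule gg)
  qed
  have leafc: "\<forall>z\<in>ball 0 1. \<forall>w\<in>ball 0 1. F (z, (1, t)) = F (w, (1, t))" if t: "t = 0 \<or> t = 2*pi" for t
  proof -
    define u where "u z = F (z, (1, t))" for z
    have tX: "(1::complex, t) \<in> X0" using t by (auto simp: X0_iff)
    have hu: "u holomorphic_on ball 0 1" using assms(6)[OF tX] unfolding u_def .
    have cu: "continuous_on (ball 0 1) u" using holomorphic_on_imp_continuous_on[OF hu] .
    have inv_u: "u (g z) = u z" if g: "g \<in> \<Gamma>" and z: "z \<in> ball 0 1" for g z
    proof -
      have aa: "arc_act g (1, t) = (g 1, t)" unfolding arc_act_def by (simp only: fst_conv snd_conv t if_True)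
      have e1: "F (g z, (g 1, t)) = F (z, (1, t))" using assms(5)[OF g z tX] aa by simp
      have gz: "g z \<in> ball 0 1" using disc_aut_disc[OF G1[OF g]] z by simp
      have g1: "g 1 \<in> sphere 0 1" using disc_aut_circle[OF G1[OF g], of 1] by simp
      have s1: "(1::complex) \<in> sphere 0 1" by simp
      have "F (g z, (g 1, t)) = F (g z, (1, t))"
      proof (cases "t = 0")
        case True
        then show ?thesis using assms(3)[OF gz g1 s1] by (simp only:)
      next
        case False
        then have "t = 2*pi" using t by (elim disjE) (simp_all only:)
        then show ?thesis using assms(4)[OF gz g1 s1] by (simp only:)
      qed
      then show ?thesis unfolding u_def using e1 by simp
    qed
    have cuK: "continuous_on K (\<lambda>z. norm (u z))"
      using continuous_on_norm[OF continuous_on_subset[OF cu K(2)]] .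
    obtain z0 where z0: "z0 \<in> K" and z0m: "\<And>k. k \<in> K \<Longrightarrow> norm (u k) \<le> norm (u z0)"
      using continuous_attains_sup[OF K(1) Kne cuK] by blast
    have bnd: "norm (u z) \<le> norm (u z0)" if z: "z \<in> ball 0 1" for z
    proof -
      from rep[OF z] obtain k where k: "k \<in> K" and hk: "\<exists>h\<in>\<Gamma>. h z = k \<and> disc_aut h \<and>
              (\<exists>g. disc_aut g \<and> (\<forall>u\<in>cball 0 1. g (h u) = u \<and> h (g u) = u))" by (rule bexE)
      from hk obtain h where h1: "h \<in> \<Gamma>" and hh: "h z = k \<and> disc_aut h \<and>
              (\<exists>g. disc_aut g \<and> (\<forall>u\<in>cball 0 1. g (h u) = u \<and> h (g u) = u))" by (rule bexE)
      have h: "h \<in> \<Gamma>" "h z = k" using h1 hh by simp_all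
      have "u z = u k" using inv_u[OF h(1) z] h(2) by simp
      then show ?thesis using z0m[OF k] by simp
    qed
    have "u constant_on ball 0 1"
      by (rule maximum_modulus_principle[OF hu open_ball connected_ball open_ball subset_refl, of z0])
         (use z0 K(2) bnd in auto)
    then obtain c where "\<And>z. z \<in> ball 0 1 \<Longrightarrow> u z = c" unfolding constant_on_def by blast
    then show ?thesis unfolding u_def by simp
  qed
  have b0: "(0::complex) \<in> ball 0 1" by simp
  have l0: "\<forall>z\<in>ball 0 1. \<forall>w\<in>ball 0 1. F (z, (1, 0)) = F (w, (1, 0))" by (rule leafc) simp
  have l2: "\<forall>z\<in>ball 0 1. \<forall>w\<in>ball 0 1. F (z, (1, 2*pi)) = F (w, (1, 2*pi))" by (rule leafc) simp
  define c0 where "c0 = F (0, (1, 0))"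
  have F0: "F (z, (\<zeta>, 0)) = c0" if z: "z \<in> ball 0 1" and \<zeta>: "norm \<zeta> = 1" for z \<zeta>
  proof -
    have "F (z, (\<zeta>, 0)) = F (z, (1, 0))" using assms(3)[OF z, of \<zeta> 1] \<zeta> by simp
    also have "\<dots> = F (0, (1, 0))" by (rule l0[rule_format, OF z b0])
    finally show ?thesis unfolding c0_def .
  qed
  show ?thesis
  proof (intro ballI)
    fix x z w assume x: "x \<in> X0" and z: "z \<in> ball (0::complex) 1" and w: "w \<in> ball (0::complex) 1"
    obtain \<zeta> t where xe: "x = (\<zeta>, t)" and \<zeta>: "norm \<zeta> = 1" and t: "0 \<le> t" "t \<le> 2*pi"
      using x unfolding X0_def by auto
    consider "t = 0" | "t = 2*pi" | "0 < t \<and> t < 2*pi" using t by linarith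
    then show "F (z, x) = F (w, x)"
    proof cases
      case 1
      then show ?thesis using F0[OF z \<zeta>] F0[OF w \<zeta>] xe by simp
    next
      case 2
      have "F (z, (\<zeta>, 2*pi)) = F (z, (1, 2*pi))" using assms(4)[OF z, of \<zeta> 1] \<zeta> by simp
      also have "\<dots> = F (w, (1, 2*pi))" by (rule l2[rule_format, OF z w])
      also have "\<dots> = F (w, (\<zeta>, 2*pi))" using assms(4)[OF w, of 1 \<zeta>] \<zeta> by simp
      finally show ?thesis using 2 xe by simp
    next
      case 3
      have "\<forall>z\<in>ball 0 1. F (z, (\<zeta>, t)) = c0"
        by (rule generic_leaf[OF K(1,2) Kne rep assms(2) assms(5) assms(6) F0 \<zeta>]) (use 3 in auto)
      then show ?thesis using z w xe by simp
    qed
  qed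
qed



end
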